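(* Let $p\ge 1$ be an integer. Then $\lambda_{\min}(\mathcal U'(p)^c)$ is the least real root of the polynomial $$g(\lambda;p)=(-4+2p)+(3-5p)\lambda+(6-p)\lambda^2+(1+4p)\lambda^3+(-2+p)\lambda^4-\lambda^5 .$$
   Context: All graphs are simple and finite. For a graph $G$, $\lambda_{\min}(G)$ denotes the least eigenvalue of the adjacency matrix $A(G)$, and $G^c$ denotes the complement of $G$. $K_{1,p}$ is the star with $p$ edges, whose degree-one vertices are called pendant vertices. For an integer $p\ge 1$, $\mathcal U'(p)$ is the graph of order $p+4$ obtained from disjoint copies of $K_{1,p}$ and the triangle $C_3$ by adding one edge joining a pendant vertex of $K_{1,p}$ to a vertex of $C_3$. *)

theory Defs
  imports "Jordan_Normal_Form.Char_Poly" "HOL-Computational_Algebra.Polynomial"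
begin

text \<open>A simple graph on vertex set {0..<n} is given by a symmetric irreflexive
  adjacency predicate E.\<close>

definition adjacency_matrix :: "nat \<Rightarrow> (nat \<Rightarrow> nat \<Rightarrow> bool) \<Rightarrow> real mat" where
  "adjacency_matrix n E = mat n n (\<lambda>(i, j). if E i j then 1 else 0)"

definition complement_graph :: "(nat \<Rightarrow> nat \<Rightarrow> bool) \<Rightarrow> nat \<Rightarrow> nat \<Rightarrow> bool" where
  "complement_graph E i j \<longleftrightarrow> i \<noteq> j \<and> \<not> E i j"

definition lambda_min :: "real mat \<Rightarrow> real" where
  "lambda_min A = Min {k. eigenvalue A k}"

text \<open>U'(p), order p+4: star K_{1,p} with centre 0 and pendant vertices 1..p;
  triangle on p+1, p+2, p+3; extra edge joining pendant vertex 1 to triangle vertex p+1.\<close>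

definition U'_edge :: "nat \<Rightarrow> nat \<Rightarrow> nat \<Rightarrow> bool" where
  "U'_edge p i j \<longleftrightarrow>
     (i = 0 \<and> 1 \<le> j \<and> j \<le> p) \<or>
     (p + 1 \<le> i \<and> i \<le> p + 3 \<and> p + 1 \<le> j \<and> j \<le> p + 3 \<and> i \<noteq> j) \<or>
     (i = 1 \<and> j = p + 1)"

definition U'_adj :: "nat \<Rightarrow> nat \<Rightarrow> nat \<Rightarrow> bool" where
  "U'_adj p i j \<longleftrightarrow> U'_edge p i j \<or> U'_edge p j i"

definition g_poly :: "nat \<Rightarrow> real poly" where
  "g_poly p = (let q = real p in
     [: -4 + 2*q, 3 - 5*q, 6 - q, 1 + 4*q, -2 + q, -1 :])"

end

theory Submission
  imports Defs
begin

definition gg :: "real \<Rightarrow> real \<Rightarrow> real" where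
 "gg P L = (-4 + 2*P) + (3 - 5*P)*L + (6-P)*L^2 + (1+4*P)*L^3 + (-2+P)*L^4 - L^5"

lemma gpoly: "poly (g_poly p) x = gg (real p) x"
  unfolding g_poly_def Let_def gg_def by (simp add: algebra_simps power2_eq_square power3_eq_cube eval_nat_numeral)

lemma quot:
  fixes q L x0 x1 x2 xa xb :: real
  assumes e1: "xa + 2*xb = L*x0"
  and e2: "q*x2 + 2*xb = L*x1"
  and e3: "x1 + (q-1)*x2 + xa + 2*xb = L*x2"
  and e4: "x0 + q*x2 = L*xa"
  and e5: "x0 + x1 + q*x2 = L*xb"
  shows "gg (q+1) L * x0 = 0 \<and> gg (q+1) L * x1 = 0 \<and> gg (q+1) L * x2 = 0 \<and> gg (q+1) L * xa = 0 \<and> gg (q+1) L * xb = 0"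
  using assms unfolding gg_def by (Groebner_Basis.algebra)

lemma constr:
  fixes P L :: real
  assumes g: "gg P L = 0"
  defines "s \<equiv> L^3+L^2-1" and "t \<equiv> -((L-1)*((P-1)-(L+1)^2))"
  defines "xa \<equiv> (L+1)*(s-t)" and "xb \<equiv> (L*t - (P-1)*s)/2"
  defines "x0 \<equiv> L*xa - (P-1)*s"
  shows "xa + 2*xb = L*x0 \<and> (P-1)*s + 2*xb = L*t \<and> t + (P-2)*s + xa + 2*xb = L*s \<and>
     x0 + (P-1)*s = L*xa \<and> x0 + t + (P-1)*s = L*xb"
  using g unfolding gg_def assms(2-) by (Groebner_Basis.algebra)

lemma gbig: "(P::real) \<ge> 1 \<Longrightarrow> gg P (-(P+2)) > 0"
proof -
  assume P: "P \<ge> 1"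
  define q where "q = P - 1"
  have q: "q \<ge> 0" using P q_def by simp
  have "gg P (-(P+2)) = 76 + 175*q + 175*q^2 + 90*q^3 + 22*q^4 + 2*q^5"
    unfolding gg_def q_def by (Groebner_Basis.algebra)
  also have "\<dots> > 0" using q by (simp add: add_pos_nonneg)
  finally show ?thesis .
qed

lemma gm2: "(P::real) \<ge> 1 \<Longrightarrow> gg P (-2) < 0"
  unfolding gg_def by simp

abbreviation CG :: "nat \<Rightarrow> nat \<Rightarrow> nat \<Rightarrow> bool" where
  "CG p \<equiv> complement_graph (U'_adj p)"

lemma Cadj: "CG p i j \<longleftrightarrow> i \<noteq> j \<and> \<not> U'_edge p i j \<and> \<not> U'_edge p j i"
  by (auto simp: complement_graph_def U'_adj_def)

lemma mv:
  assumes "v \<in> carrier_vec (p+4)" "i < p+4"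
  shows "(adjacency_matrix (p+4) (CG p) *\<^sub>v v) $ i = (\<Sum>j<p+4. if CG p i j then v$j else 0)"
  using assms unfolding adjacency_matrix_def
  by (auto simp: scalar_prod_def atLeast0LessThan intro!: sum.cong)

lemma split4:
  fixes p :: nat and h :: "nat \<Rightarrow> real"
  assumes "p \<ge> 1"
  shows "(\<Sum>j<p+4. h j) = h 0 + h 1 + (\<Sum>j\<in>{2..p}. h j) + h (p+1) + h (p+2) + h (p+3)"
proof -
  have E: "{..<p+4} = ({0,1} \<union> {2..p}) \<union> {p+1,p+2,p+3}" using assms by auto
  have "(\<Sum>j\<in>({0,1} \<union> {2..p}) \<union> {p+1,p+2,p+3}. h j)
      = (\<Sum>j\<in>{0,1} \<union> {2..p}. h j) + (\<Sum>j\<in>{p+1,p+2,p+3}. h j)"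
    using assms by (intro sum.union_disjoint) auto
  also have "(\<Sum>j\<in>{0,1} \<union> {2..p}. h j) = (\<Sum>j\<in>{0,1}. h j) + (\<Sum>j\<in>{2..p}. h j)"
    by (rule sum.union_disjoint) auto
  also have "(\<Sum>j\<in>{0,1}. h j) = h 0 + h 1" by simp
  also have "(\<Sum>j\<in>{p+1,p+2,p+3}. h j) = h (p+1) + h (p+2) + h (p+3)" by (simp add: add.assoc)
  finally show ?thesis unfolding E by (simp add: add.assoc)
qed

lemma sum_minus1:
  assumes "finite A" "i \<in> A"
  shows "(\<Sum>j\<in>A. if i \<noteq> j then f j else 0) = (\<Sum>j\<in>A. f j) - (f i :: real)"
proof -
  have "(\<Sum>j\<in>A. if i \<noteq> j then f j else 0) = (if i \<noteq> i then f i else 0) + (\<Sum>j\<in>A - {i}. if i \<noteq> j then f j else 0)"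
    using assms by (rule sum.remove)
  also have "(\<Sum>j\<in>A - {i}. if i \<noteq> j then f j else 0) = (\<Sum>j\<in>A - {i}. f j)"
    by (rule sum.cong) auto
  also have "(\<Sum>j\<in>A. f j) = f i + (\<Sum>j\<in>A - {i}. f j)"
    using assms by (rule sum.remove)
  ultimately show ?thesis by simp
qed

context
  fixes p :: nat and v :: "real vec"
  assumes p: "p \<ge> 1" and v: "v \<in> carrier_vec (p+4)"
begin

abbreviation "AA \<equiv> adjacency_matrix (p+4) (CG p)"
abbreviation "SS \<equiv> (\<Sum>j\<in>{2..p}. v$j)"

lemma row0: "(AA *\<^sub>v v) $ 0 = v$(p+1) + v$(p+2) + v$(p+3)"
proof -
  have "(\<Sum>j\<in>{2..p}. if CG p 0 j then v$j else 0) = 0"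
    by (rule sum.neutral) (auto simp: Cadj U'_edge_def)
  then show ?thesis using p v by (simp add: mv split4 Cadj U'_edge_def)
qed

lemma row1: "(AA *\<^sub>v v) $ 1 = SS + v$(p+2) + v$(p+3)"
proof -
  have "(\<Sum>j\<in>{2..p}. if CG p 1 j then v$j else 0) = SS"
    by (rule sum.cong) (auto simp: Cadj U'_edge_def)
  then show ?thesis using p v by (simp add: mv split4 Cadj U'_edge_def)
qed

lemma rowi: assumes i: "2 \<le> i" "i \<le> p"
  shows "(AA *\<^sub>v v) $ i = v$1 + (SS - v$i) + v$(p+1) + v$(p+2) + v$(p+3)"
proof -
  have "(\<Sum>j\<in>{2..p}. if CG p i j then v$j else 0) = (\<Sum>j\<in>{2..p}. if i \<noteq> j then v$j else 0)"
    using i by (intro sum.cong) (auto simp: Cadj U'_edge_def)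
  also have "\<dots> = SS - v$i" using i by (intro sum_minus1) auto
  finally have *: "(\<Sum>j\<in>{2..p}. if CG p i j then v$j else 0) = SS - v$i" .
  have "(AA *\<^sub>v v) $ i = (\<Sum>j<p+4. if CG p i j then v$j else 0)"
    using i v by (intro mv) auto
  also have "\<dots> = (if CG p i 0 then v$0 else 0) + (if CG p i 1 then v$1 else 0) + (SS - v$i)
     + (if CG p i (p+1) then v$(p+1) else 0) + (if CG p i (p+2) then v$(p+2) else 0)
     + (if CG p i (p+3) then v$(p+3) else 0)"
    unfolding split4[OF p] * ..
  finally show ?thesis using p i by (simp add: Cadj U'_edge_def)
qed

lemma rowa: "(AA *\<^sub>v v) $ (p+1) = v$0 + SS"
proof -
  have "(\<Sum>j\<in>{2..p}. if CG p (p+1) j then v$j else 0) = SS"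
    by (rule sum.cong) (auto simp: Cadj U'_edge_def)
  then show ?thesis using p v by (simp add: mv split4 Cadj U'_edge_def)
qed

lemma rowb: "(AA *\<^sub>v v) $ (p+2) = v$0 + v$1 + SS"
proof -
  have "(\<Sum>j\<in>{2..p}. if CG p (p+2) j then v$j else 0) = SS"
    by (rule sum.cong) (auto simp: Cadj U'_edge_def)
  then show ?thesis using p v by (simp add: mv split4 Cadj U'_edge_def)
qed

lemma rowc: "(AA *\<^sub>v v) $ (p+3) = v$0 + v$1 + SS"
proof -
  have "(\<Sum>j\<in>{2..p}. if CG p (p+3) j then v$j else 0) = SS"
    by (rule sum.cong) (auto simp: Cadj U'_edge_def)
  then show ?thesis using p v by (simp add: mv split4 Cadj U'_edge_def)
qed

end

lemma dimAA: "dim_row (adjacency_matrix n E) = n"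
  by (simp add: adjacency_matrix_def)

lemma SS_const:
  fixes p :: nat and v :: "real vec"
  assumes p: "p \<ge> 1" and c: "\<And>i. 2 \<le> i \<Longrightarrow> i \<le> p \<Longrightarrow> v$i = x"
  shows "(\<Sum>j\<in>{2..p}. v$j) = (real p - 1) * x"
proof -
  have "(\<Sum>j\<in>{2..p}. v$j) = (\<Sum>j\<in>{2..p}. x)" using c by (intro sum.cong) auto
  also have "\<dots> = real (p - 1) * x" by simp
  also have "real (p - 1) = real p - 1" using p by simp
  finally show ?thesis .
qed

lemma eig_cases:
  fixes p :: nat and k :: real
  assumes p: "p \<ge> 1" and ev: "eigenvalue (adjacency_matrix (p+4) (CG p)) k"
  shows "k = -1 \<or> k = 0 \<or> gg (real p) k = 0"
proof (rule ccontr)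
  assume H: "\<not> (k = -1 \<or> k = 0 \<or> gg (real p) k = 0)"
  then have k1: "k \<noteq> -1" and k0: "k \<noteq> 0" and g: "gg (real p) k \<noteq> 0" by auto
  from ev obtain v where v: "v \<in> carrier_vec (p+4)" and v0: "v \<noteq> 0\<^sub>v (p+4)"
    and eq: "adjacency_matrix (p+4) (CG p) *\<^sub>v v = k \<cdot>\<^sub>v v"
    unfolding eigenvalue_def eigenvector_def dimAA by auto
  have E: "(adjacency_matrix (p+4) (CG p) *\<^sub>v v) $ i = k * v$i" if "i < p+4" for i
    using eq that v by simp
  define SS where "SS = (\<Sum>j\<in>{2..p}. v$j)"
  have r0: "v$(p+1) + v$(p+2) + v$(p+3) = k * v$0" using E[of 0] row0[OF p v] by simp
  have r1: "SS + v$(p+2) + v$(p+3) = k * v$1" using E[of 1] row1[OF p v] SS_def by simp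
  have ri: "v$1 + (SS - v$i) + v$(p+1) + v$(p+2) + v$(p+3) = k * v$i" if "2 \<le> i" "i \<le> p" for i
    using E[of i] rowi[OF p v that] SS_def that by simp
  have ra: "v$0 + SS = k * v$(p+1)" using E[of "p+1"] rowa[OF p v] SS_def by simp
  have rb: "v$0 + v$1 + SS = k * v$(p+2)" using E[of "p+2"] rowb[OF p v] SS_def by simp
  have rc: "v$0 + v$1 + SS = k * v$(p+3)" using E[of "p+3"] rowc[OF p v] SS_def by simp
  have bc: "v$(p+3) = v$(p+2)" using rb rc k0 by simp
  define T where "T = v$1 + SS + v$(p+1) + v$(p+2) + v$(p+3)"
  define x2 where "x2 = T / (k+1)"
  have k1': "k + 1 \<noteq> 0" using k1 by auto
  have vi: "v$i = x2" if "2 \<le> i" "i \<le> p" for i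
  proof -
    have "(k+1) * v$i = T" using ri[OF that] unfolding T_def by (simp add: algebra_simps)
    then show ?thesis unfolding x2_def using k1' by (simp add: field_simps)
  qed
  have SSx: "SS = (real p - 1) * x2" unfolding SS_def by (rule SS_const[OF p vi])
  have T2: "(k+1) * x2 = T" unfolding x2_def using k1' by simp
  define q where "q = real p - 1"
  have qp: "q + 1 = real p" unfolding q_def by simp
  have Q: "gg (q+1) k * v$0 = 0 \<and> gg (q+1) k * v$1 = 0 \<and> gg (q+1) k * x2 = 0 \<and>
       gg (q+1) k * v$(p+1) = 0 \<and> gg (q+1) k * v$(p+2) = 0"
  proof (rule quot)
    show "v$(p+1) + 2 * v$(p+2) = k * v$0" using r0 bc by simp
    show "q * x2 + 2 * v$(p+2) = k * v$1" using r1 bc SSx q_def by simp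
    show "v$1 + (q - 1) * x2 + v$(p+1) + 2 * v$(p+2) = k * x2"
      using T2 bc SSx unfolding T_def q_def by (simp add: algebra_simps)
    show "v$0 + q * x2 = k * v$(p+1)" using ra SSx q_def by simp
    show "v$0 + v$1 + q * x2 = k * v$(p+2)" using rb SSx q_def by simp
  qed
  then have z: "v$0 = 0" "v$1 = 0" "x2 = 0" "v$(p+1) = 0" "v$(p+2) = 0"
    using g unfolding qp by auto
  have "v = 0\<^sub>v (p+4)"
  proof (rule eq_vecI)
    show "dim_vec v = dim_vec (0\<^sub>v (p + 4))" using v by simp
    fix i assume "i < dim_vec (0\<^sub>v (p + 4))"
    then have i: "i < p + 4" by simp
    have "v$i = 0"
    proof -
      consider "i = 0" | "i = 1" | "2 \<le> i \<and> i \<le> p" | "i = p+1" | "i = p+2" | "i = p+3"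
        using i by linarith
      then show ?thesis using z vi bc by cases auto
    qed
    then show "v $ i = 0\<^sub>v (p + 4) $ i" using i by simp
  qed
  with v0 show False by simp
qed

lemma eig_root:
  fixes p :: nat and m :: real
  assumes p: "p \<ge> 1" and g: "gg (real p) m = 0" and m: "m < -2"
  shows "eigenvalue (adjacency_matrix (p+4) (CG p)) m"
proof -
  define P where "P = real p"
  define s where "s = m^3+m^2-1"
  define t where "t = -((m-1)*((P-1)-(m+1)^2))"
  define xa where "xa = (m+1)*(s-t)"
  define xb where "xb = (m*t - (P-1)*s)/2"
  define x0 where "x0 = m*xa - (P-1)*s"
  have C: "xa + 2*xb = m*x0 \<and> (P-1)*s + 2*xb = m*t \<and> t + (P-2)*s + xa + 2*xb = m*s \<and>
     x0 + (P-1)*s = m*xa \<and> x0 + t + (P-1)*s = m*xb"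
    unfolding s_def t_def xa_def xb_def x0_def by (rule constr) (use g P_def in simp)
  define v where "v = vec (p+4) (\<lambda>j. if j = 0 then x0 else if j = 1 then t else if j \<le> p then s
       else if j = p+1 then xa else xb)"
  have v: "v \<in> carrier_vec (p+4)" unfolding v_def by simp
  have vi: "v$i = s" if "2 \<le> i" "i \<le> p" for i using that unfolding v_def by simp
  have SSx: "(\<Sum>j\<in>{2..p}. v$j) = (P - 1) * s" unfolding P_def by (rule SS_const[OF p vi])
  have v0: "v$0 = x0" and v1: "v$1 = t" and va: "v$(p+1) = xa" and vb: "v$(p+2) = xb"
    and vc: "v$(p+3) = xb" unfolding v_def using p by auto
  have eq: "adjacency_matrix (p+4) (CG p) *\<^sub>v v = m \<cdot>\<^sub>v v"
  proof (rule eq_vecI)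
    show "dim_vec (adjacency_matrix (p+4) (CG p) *\<^sub>v v) = dim_vec (m \<cdot>\<^sub>v v)"
      using v by (simp add: adjacency_matrix_def)
    fix i assume "i < dim_vec (m \<cdot>\<^sub>v v)"
    then have i: "i < p + 4" using v by simp
    have "(adjacency_matrix (p+4) (CG p) *\<^sub>v v) $ i = m * v$i"
    proof -
      consider "i = 0" | "i = 1" | "2 \<le> i \<and> i \<le> p" | "i = p+1" | "i = p+2" | "i = p+3"
        using i by linarith
      then show ?thesis
      proof cases
        case 1 then show ?thesis using row0[OF p v] v0 va vb vc C by simp
      next
        case 2 then show ?thesis using row1[OF p v] v1 vb vc SSx C by simp
      next
        case 3 then show ?thesis using rowi[OF p v, of i] vi[of i] v1 va vb vc SSx C
          by (simp add: algebra_simps)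
      next
        case 4 then show ?thesis using rowa[OF p v] v0 va SSx C by simp
      next
        case 5 then show ?thesis using rowb[OF p v] v0 v1 vb SSx C by simp
      next
        case 6 then show ?thesis using rowc[OF p v] v0 v1 vc SSx C by simp
      qed
    qed
    then show "(adjacency_matrix (p+4) (CG p) *\<^sub>v v) $ i = (m \<cdot>\<^sub>v v) $ i" using i v by simp
  qed
  have sneg: "s < 0"
  proof -
    have "m^2 * (m+1) < 0" using m by (simp add: mult_pos_neg)
    then show ?thesis unfolding s_def by (simp add: algebra_simps power2_eq_square power3_eq_cube)
  qed
  have "v \<noteq> 0\<^sub>v (p+4)"
  proof
    assume "v = 0\<^sub>v (p+4)"
    then have "t = 0" "xa = 0" using v1 va p by auto
    then have "(m+1) * s = 0" unfolding xa_def by simp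
    then show False using m sneg by simp
  qed
  then show ?thesis unfolding eigenvalue_def eigenvector_def dimAA using v eq by auto
qed

theorem mainTheorem8:
  fixes p :: nat
  assumes "p \<ge> 1"
  shows "lambda_min (adjacency_matrix (p + 4) (complement_graph (U'_adj p)))
           = Min {x :: real. poly (g_poly p) x = 0}"
proof -
  have p: "p \<ge> 1" by fact
  define R where "R = {x :: real. gg (real p) x = 0}"
  have RR: "{x :: real. poly (g_poly p) x = 0} = R" unfolding R_def gpoly ..
  have gnz: "g_poly p \<noteq> 0"
  proof
    assume "g_poly p = 0"
    then have "gg (real p) (-2) = 0" using gpoly[of p "-2"] by simp
    with gm2[of "real p"] p show False by simp
  qed
  have finR: "finite R" using poly_roots_finite[OF gnz] RR by simp
  have "\<exists>x. -(real p + 2) < x \<and> x < -2 \<and> poly (g_poly p) x = 0"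
  proof (rule poly_IVT_neg)
    show "-(real p + 2) < -2" using p by simp
    show "0 < poly (g_poly p) (-(real p + 2))" unfolding gpoly using gbig[of "real p"] p by simp
    show "poly (g_poly p) (-2) < 0" unfolding gpoly using gm2[of "real p"] p by simp
  qed
  then obtain r where r: "r < -2" "r \<in> R" using RR by auto
  define m where "m = Min R"
  have mR: "m \<in> R" unfolding m_def using finR r by (intro Min_in) auto
  have mlt: "m < -2" using Min_le[OF finR r(2)] r unfolding m_def by simp
  define E where "E = {k. eigenvalue (adjacency_matrix (p+4) (CG p)) k}"
  have mE: "m \<in> E" unfolding E_def using eig_root[OF p _ mlt] mR R_def by simp
  have ES: "E \<subseteq> R \<union> {-1, 0}" unfolding E_def R_def using eig_cases[OF p] by auto
  have finE: "finite E" using finR ES by (meson finite_Un finite.emptyI finite_insert finite_subset)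
  have "Min E = m"
  proof (rule Min_eqI[OF finE])
    fix k assume "k \<in> E"
    then have "k \<in> R \<or> k = -1 \<or> k = 0" using ES by auto
    then show "m \<le> k" using mlt Min_le[OF finR] unfolding m_def by auto
  qed (rule mE)
  then show ?thesis unfolding lambda_min_def RR m_def E_def by simp
qed


end
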